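(* Let $T_1$ and $T_2$ be $\pi$-increasing trees with disjoint vertex-sets, with $T_1$ irreducible. For $i=1,2$, let $m_i$ be the maximum element of $V(T_i)$. Let $v_2$ be a vertex of $T_2$ with $v_2<m_1$, and let $T=\mathrm{spl}(T_1,m_1;T_2,v_2)$. (a) If $m_1>m_2$, then $T$ is reducible; more precisely, $G_{m_1}(T)$ is the disjoint union $G_{m_1}(T_1)\sqcup G_{v_2}(T_2)$. (b) If $m_1<m_2$ and $T_2$ is irreducible, then $T$ is irreducible.
   Context: Standing assumptions: $r\ge2$ and $\pi$ is a set partition of $\{1,\dots,r\}$ having $\{1\}$ as a block; its blocks are $\pi_1,\dots,\pi_k$ with maxima $\mu_i=\max\pi_i$; $\pi^x$ denotes the block containing $x$. An unordered increasing tree is a rooted tree on distinct positive integers, sons unordered, each son larger than its father. A $\pi$-increasing tree is an unordered increasing tree $T$ whose vertex-set is a union of blocks of $\pi$ and such that for any two elements $i<j$ of a same block of $\pi$ contained in $V(T)$, $i$ is an ancestor of $j$ in $T$. $v$-decomposition: for a vertex $v$ of $T$ with chain $a_1<\dots<a_\ell=v$ from the root to $v$, removing the chain edges leaves components $T^{(a_j)}$ rooted at $a_j$. Splice: for unordered increasing trees $T_1,T_2$ with disjoint vertex-sets and $v_1\in V(T_1)$, $v_2\in V(T_2)$, $v_1>v_2$, $\mathrm{spl}(T_1,v_1;T_2,v_2)$ is the tree on $V(T_1)\cup V(T_2)$ obtained by merging the root-to-$v_1$ chain of $T_1$ and the root-to-$v_2$ chain of $T_2$ into one increasing chain (root = smallest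 element, ending at $v_1$) and attaching at each chain vertex its component from the $v_1$-decomposition of $T_1$ or the $v_2$-decomposition of $T_2$. $v$-dependence graph $G_v(T)$ of a $\pi$-increasing tree $T$: directed graph whose vertices are the blocks of $\pi$ contained in $V(T)$; for each such block $\pi_i$ whose maximum $\mu_i$ is not on the chain $a_1,\dots,a_\ell$ from the root to $v$, $\mu_i$ is a non-root vertex of a unique $T^{(a_j)}$ and there is an edge (possibly a loop) from $\pi_i$ to $\pi^{a_j}$; no other edges. A $\pi$-increasing tree with maximum vertex $M$ is irreducible if $G_M(T)$ is connected (ignoring directions), reducible otherwise. *)

theory Defs
  imports Main
begin

definition set_partition :: "nat \<Rightarrow> nat set set \<Rightarrow> bool" where
  "set_partition r P \<longleftrightarrow> \<Union>P = {1..r} \<and> (\<forall>B\<in>P. B \<noteq> {}) \<and>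
     (\<forall>B\<in>P. \<forall>B'\<in>P. B \<noteq> B' \<longrightarrow> B \<inter> B' = {})"

definition blk :: "nat set set \<Rightarrow> nat \<Rightarrow> nat set" where
  "blk P x = (THE B. B \<in> P \<and> x \<in> B)"

text \<open>An unordered increasing tree is represented by its (finite, nonempty) vertex set V of
  positive integers and a parent function par; the root is Min V, and every non-root vertex
  has its father in V, smaller than itself.\<close>
definition increasing_tree :: "nat set \<Rightarrow> (nat \<Rightarrow> nat) \<Rightarrow> bool" where
  "increasing_tree V par \<longleftrightarrow> finite V \<and> V \<noteq> {} \<and> 0 \<notin> V \<and>
     (\<forall>y\<in>V. y \<noteq> Min V \<longrightarrow> par y \<in> V \<and> par y < y)"

definition tedges :: "nat set \<Rightarrow> (nat \<Rightarrow> nat) \<Rightarrow> (nat \<times> nat) set" where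
  "tedges V par = {(par y, y) | y. y \<in> V \<and> y \<noteq> Min V}"

definition anc :: "nat set \<Rightarrow> (nat \<Rightarrow> nat) \<Rightarrow> nat \<Rightarrow> nat \<Rightarrow> bool" where
  "anc V par a x \<longleftrightarrow> (a, x) \<in> (tedges V par)\<^sup>+"

definition chain :: "nat set \<Rightarrow> (nat \<Rightarrow> nat) \<Rightarrow> nat \<Rightarrow> nat set" where
  "chain V par v = {a. a = v \<or> anc V par a v}"

text \<open>In the v-decomposition, the chain vertex a_j such that x lies in the component T^(a_j):
  the deepest vertex of the root-to-v chain which is an ancestor of (or equal to) x.\<close>
definition comp_root :: "nat set \<Rightarrow> (nat \<Rightarrow> nat) \<Rightarrow> nat \<Rightarrow> nat \<Rightarrow> nat" where
  "comp_root V par v x = Max (chain V par v \<inter> chain V par x)"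

definition pi_increasing :: "nat set set \<Rightarrow> nat set \<Rightarrow> (nat \<Rightarrow> nat) \<Rightarrow> bool" where
  "pi_increasing P V par \<longleftrightarrow> increasing_tree V par \<and>
     V = \<Union>{B \<in> P. B \<subseteq> V} \<and>
     (\<forall>B\<in>P. B \<subseteq> V \<longrightarrow> (\<forall>i\<in>B. \<forall>j\<in>B. i < j \<longrightarrow> anc V par i j))"

definition dg_vert :: "nat set set \<Rightarrow> nat set \<Rightarrow> nat set set" where
  "dg_vert P V = {B \<in> P. B \<subseteq> V}"

definition dg_edges :: "nat set set \<Rightarrow> nat set \<Rightarrow> (nat \<Rightarrow> nat) \<Rightarrow> nat \<Rightarrow> (nat set \<times> nat set) set" where
  "dg_edges P V par v =
     {(B, blk P (comp_root V par v (Max B))) | B. B \<in> P \<and> B \<subseteq> V \<and> Max B \<notin> chain V par v}"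

definition dg_connected :: "nat set set \<Rightarrow> (nat set \<times> nat set) set \<Rightarrow> bool" where
  "dg_connected Vs Es \<longleftrightarrow> (\<forall>B\<in>Vs. \<forall>B'\<in>Vs. (B, B') \<in> (Es \<union> Es\<inverse>)\<^sup>*)"

definition irreducible :: "nat set set \<Rightarrow> nat set \<Rightarrow> (nat \<Rightarrow> nat) \<Rightarrow> bool" where
  "irreducible P V par \<longleftrightarrow> pi_increasing P V par \<and>
     dg_connected (dg_vert P V) (dg_edges P V par (Max V))"

definition reducible :: "nat set set \<Rightarrow> nat set \<Rightarrow> (nat \<Rightarrow> nat) \<Rightarrow> bool" where
  "reducible P V par \<longleftrightarrow> pi_increasing P V par \<and>
     \<not> dg_connected (dg_vert P V) (dg_edges P V par (Max V))"

text \<open>Splice spl(T1,v1;T2,v2): vertex set V1 \<union> V2; the merged chain C is the union of the two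
  root-to-v chains, each chain vertex gets its predecessor in C as father; every other vertex keeps
  its father (components of the decompositions are attached unchanged).\<close>
definition spl_par :: "nat set \<Rightarrow> (nat \<Rightarrow> nat) \<Rightarrow> nat \<Rightarrow> nat set \<Rightarrow> (nat \<Rightarrow> nat) \<Rightarrow> nat \<Rightarrow> nat \<Rightarrow> nat" where
  "spl_par V1 p1 v1 V2 p2 v2 x =
     (let C = chain V1 p1 v1 \<union> chain V2 p2 v2 in
      if x \<in> C then Max {c \<in> C. c < x}
      else if x \<in> V1 then p1 x else p2 x)"

end

theory Submission
  imports Defs
begin

lemma anc_unfold:
  "anc V par a x \<longleftrightarrow> x \<in> V \<and> x \<noteq> Min V \<and> (a = par x \<or> anc V par a (par x))"
proof
  assume "anc V par a x"
  then have "(a, x) \<in> (tedges V par)\<^sup>+" by (simp add: anc_def)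
  then show "x \<in> V \<and> x \<noteq> Min V \<and> (a = par x \<or> anc V par a (par x))"
  proof (cases rule: tranclE)
    case base then show ?thesis by (auto simp: tedges_def)
  next
    case (step c) then show ?thesis by (auto simp: tedges_def anc_def)
  qed
next
  assume h: "x \<in> V \<and> x \<noteq> Min V \<and> (a = par x \<or> anc V par a (par x))"
  have e: "(par x, x) \<in> tedges V par" using h by (auto simp: tedges_def)
  show "anc V par a x"
    using h e unfolding anc_def by (auto intro: trancl_into_trancl)
qed

lemma chain_iff: "a \<in> chain V par v \<longleftrightarrow> a = v \<or> anc V par a v"
  by (simp add: chain_def)

lemma cr_eqI:
  assumes "finite (chain V par u)" "c \<in> chain V par u" "c \<in> chain V par x"
    "\<And>d. d \<in> chain V par u \<Longrightarrow> d \<in> chain V par x \<Longrightarrow> d \<le> c"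
  shows "comp_root V par u x = c"
  unfolding comp_root_def using assms by (intro Max_eqI) auto

lemma dg_edges_iff:
  "(X, Y) \<in> dg_edges P V par v \<longleftrightarrow> X \<in> P \<and> X \<subseteq> V \<and> Max X \<notin> chain V par v \<and>
     Y = blk P (comp_root V par v (Max X))"
  by (auto simp: dg_edges_def)

locale itree =
  fixes V :: "nat set" and par :: "nat \<Rightarrow> nat"
  assumes it: "increasing_tree V par"
begin

lemma fin: "finite V" and ne: "V \<noteq> {}" and nz: "0 \<notin> V"
  using it by (auto simp: increasing_tree_def)

lemma par_mem: "y \<in> V \<Longrightarrow> y \<noteq> Min V \<Longrightarrow> par y \<in> V \<and> par y < y"
  using it by (auto simp: increasing_tree_def)

lemma Min_in: "Min V \<in> V" using fin ne by simp

lemma Min_le: "y \<in> V \<Longrightarrow> Min V \<le> y" using fin by simp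

lemma anc_mem: "anc V par a x \<Longrightarrow> a \<in> V \<and> x \<in> V \<and> a < x"
proof -
  assume "anc V par a x"
  then have "(a, x) \<in> (tedges V par)\<^sup>+" by (simp add: anc_def)
  then show ?thesis
  proof (induction rule: trancl_induct)
    case (base y) then show ?case using par_mem by (auto simp: tedges_def)
  next
    case (step y z)
    then have "y = par z" "z \<in> V" "z \<noteq> Min V" by (auto simp: tedges_def)
    then show ?case using step.IH par_mem[of z] by auto
  qed
qed

lemma anc_trans: "anc V par a b \<Longrightarrow> anc V par b c \<Longrightarrow> anc V par a c"
  unfolding anc_def by (rule trancl_trans)

lemma anc_edge: "x \<in> V \<Longrightarrow> x \<noteq> Min V \<Longrightarrow> anc V par (par x) x"
  by (subst anc_unfold) auto

lemma root_anc: "x \<in> V \<Longrightarrow> x \<noteq> Min V \<Longrightarrow> anc V par (Min V) x"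
proof (induction x rule: less_induct)
  case (less x)
  have px: "par x \<in> V" "par x < x" using par_mem less.prems by auto
  show ?case
  proof (cases "par x = Min V")
    case True then show ?thesis using anc_edge less.prems by metis
  next
    case False
    then have "anc V par (Min V) (par x)" using less.IH px by auto
    then show ?thesis using anc_edge less.prems anc_trans by blast
  qed
qed

lemma anc_linear: "anc V par a x \<Longrightarrow> anc V par b x \<Longrightarrow> a = b \<or> anc V par a b \<or> anc V par b a"
proof (induction x rule: less_induct)
  case (less x)
  from less.prems have x: "x \<in> V" "x \<noteq> Min V" by (auto simp: anc_unfold[of V par _ x])
  have px: "par x < x" using par_mem x by auto
  from less.prems(1) have a: "a = par x \<or> anc V par a (par x)" by (subst (asm) anc_unfold) auto
  from less.prems(2) have b: "b = par x \<or> anc V par b (par x)" by (subst (asm) anc_unfold) auto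
  from a b show ?case using less.IH[OF px] by auto
qed

lemma chain_le: "a \<in> chain V par v \<Longrightarrow> a \<le> v"
  using anc_mem by (auto simp: chain_iff dest: less_imp_le)

lemma chain_sub: "v \<in> V \<Longrightarrow> chain V par v \<subseteq> V"
  using anc_mem by (auto simp: chain_iff)

lemma chain_fin: "v \<in> V \<Longrightarrow> finite (chain V par v)"
  using chain_sub fin finite_subset by blast

lemma Min_chain: "v \<in> V \<Longrightarrow> Min V \<in> chain V par v"
  using root_anc by (auto simp: chain_iff)

lemma self_chain: "v \<in> chain V par v" by (simp add: chain_iff)

lemma chain_trans: "c \<in> chain V par z \<Longrightarrow> chain V par c \<subseteq> chain V par z"
  using anc_trans by (auto simp: chain_iff)

lemma chain_ord: "c \<in> chain V par u \<Longrightarrow> d \<in> chain V par u \<Longrightarrow> c \<le> d \<Longrightarrow> c \<in> chain V par d"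
proof -
  assume c: "c \<in> chain V par u" and d: "d \<in> chain V par u" and le: "c \<le> d"
  show ?thesis
  proof (cases "c = d")
    case True then show ?thesis by (simp add: self_chain)
  next
    case False
    then have lt: "c < d" using le by simp
    show ?thesis
    proof (cases "d = u")
      case True then show ?thesis using c by simp
    next
      case False
      then have du: "anc V par d u" using d by (simp add: chain_iff)
      then have "d < u" using anc_mem by blast
      then have cu: "anc V par c u" using c lt by (auto simp: chain_iff)
      from anc_linear[OF cu du] lt anc_mem[of d c] show ?thesis by (auto simp: chain_iff)
    qed
  qed
qed

lemma chain_anc: "c \<in> chain V par u \<Longrightarrow> d \<in> chain V par u \<Longrightarrow> c < d \<Longrightarrow> anc V par c d"
proof -
  assume a: "c \<in> chain V par u" "d \<in> chain V par u" "c < d"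
  then have "c \<in> chain V par d" using chain_ord[of c u d] by simp
  then show ?thesis using a(3) by (simp add: chain_iff)
qed

lemma cr_props:
  assumes u: "u \<in> V" and x: "x \<in> V"
  shows "comp_root V par u x \<in> chain V par u" "comp_root V par u x \<in> chain V par x"
    "chain V par u \<inter> chain V par x = {a \<in> chain V par u. a \<le> comp_root V par u x}"
proof -
  let ?S = "chain V par u \<inter> chain V par x"
  have fS: "finite ?S" using chain_fin[OF u] by simp
  have nS: "?S \<noteq> {}" using Min_chain u x by blast
  have m: "Max ?S \<in> ?S" using fS nS by (rule Max_in)
  then show "comp_root V par u x \<in> chain V par u" "comp_root V par u x \<in> chain V par x"
    unfolding comp_root_def using m by auto
  show "?S = {a \<in> chain V par u. a \<le> comp_root V par u x}"
  proof
    show "?S \<subseteq> {a \<in> chain V par u. a \<le> comp_root V par u x}"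
      using fS by (auto simp: comp_root_def)
    show "{a \<in> chain V par u. a \<le> comp_root V par u x} \<subseteq> ?S"
    proof
      fix a assume a: "a \<in> {a \<in> chain V par u. a \<le> comp_root V par u x}"
      have "a \<in> chain V par (Max ?S)"
        using chain_ord[of a u "Max ?S"] m a by (simp add: comp_root_def)
      then have "a \<in> chain V par x" using chain_trans[of "Max ?S" x] m by blast
      then show "a \<in> ?S" using a by simp
    qed
  qed
qed

lemma min_chain:
  assumes "c \<in> chain V par u" "c' \<in> chain V par u" "c \<in> chain V par y" "c' \<in> chain V par z"
  shows "min c c' \<in> chain V par y \<inter> chain V par z"
proof (cases "c \<le> c'")
  case True
  then have "c \<in> chain V par c'" using chain_ord assms by blast
  then have "c \<in> chain V par z" using chain_trans[of c' z] assms(4) by blast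
  moreover have "min c c' = c" using True by simp
  ultimately show ?thesis using assms(3) by simp
next
  case False
  then have "c' \<in> chain V par c" using chain_ord[of c' u c] assms(1,2) by simp
  then have "c' \<in> chain V par y" using chain_trans[of c y] assms(3) by blast
  moreover have "min c c' = c'" using False by simp
  ultimately show ?thesis using assms(4) by simp
qed

end

locale spl = T1: itree V1 p1 + T2: itree V2 p2
  for V1 p1 V2 p2 +
  fixes u1 u2 :: nat
  assumes u1: "u1 \<in> V1" and u2: "u2 \<in> V2" and disj: "V1 \<inter> V2 = {}"
begin

abbreviation "K1 \<equiv> chain V1 p1 u1"
abbreviation "K2 \<equiv> chain V2 p2 u2"
abbreviation "CC \<equiv> K1 \<union> K2"
abbreviation "VV \<equiv> V1 \<union> V2"
abbreviation "pp \<equiv> spl_par V1 p1 u1 V2 p2 u2"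

lemma K1_sub: "K1 \<subseteq> V1" using T1.chain_sub u1 .
lemma K2_sub: "K2 \<subseteq> V2" using T2.chain_sub u2 .
lemma C_sub: "CC \<subseteq> VV" using K1_sub K2_sub by blast
lemma VV_fin: "finite VV" using T1.fin T2.fin by simp
lemma C_fin: "finite CC" using C_sub VV_fin finite_subset by blast

lemma MinV1: "Min V1 \<in> K1" using T1.Min_chain u1 .
lemma MinV2: "Min V2 \<in> K2" using T2.Min_chain u2 .

lemma MinVV: "Min VV \<in> CC"
proof -
  have "Min VV = min (Min V1) (Min V2)"
    using Min_Un[of V1 V2] T1.fin T2.fin T1.ne T2.ne by simp
  then show ?thesis using MinV1 MinV2 by (auto simp: min_def)
qed

lemma MinVV_le: "y \<in> VV \<Longrightarrow> Min VV \<le> y" using VV_fin by simp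

lemma pp_eq: "pp x = (if x \<in> CC then Max {c \<in> CC. c < x} else if x \<in> V1 then p1 x else p2 x)"
  by (simp add: spl_par_def Let_def)

lemma pC:
  assumes x: "x \<in> CC" "x \<noteq> Min VV"
  shows "pp x \<in> CC" "pp x < x" "\<And>c. c \<in> CC \<Longrightarrow> c < x \<Longrightarrow> c \<le> pp x"
proof -
  let ?S = "{c \<in> CC. c < x}"
  have fS: "finite ?S" using C_fin by simp
  have "Min VV < x" using MinVV_le[of x] x C_sub by auto
  then have nS: "?S \<noteq> {}" using MinVV by blast
  have "Max ?S \<in> ?S" using fS nS by (rule Max_in)
  then show "pp x \<in> CC" "pp x < x" using x by (auto simp: pp_eq)
  show "\<And>c. c \<in> CC \<Longrightarrow> c < x \<Longrightarrow> c \<le> pp x" using x fS by (auto simp: pp_eq)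
qed

lemma tree: "increasing_tree VV pp"
proof -
  have "\<forall>y\<in>VV. y \<noteq> Min VV \<longrightarrow> pp y \<in> VV \<and> pp y < y"
  proof (intro ballI impI)
    fix y assume y: "y \<in> VV" "y \<noteq> Min VV"
    show "pp y \<in> VV \<and> pp y < y"
    proof (cases "y \<in> CC")
      case True then show ?thesis using pC[of y] y C_sub by auto
    next
      case False
      show ?thesis
      proof (cases "y \<in> V1")
        case True
        then have "y \<noteq> Min V1" using MinV1 False by auto
        then show ?thesis using T1.par_mem[of y] True False by (simp add: pp_eq)
      next
        case F2: False
        then have y2: "y \<in> V2" using y by simp
        then have "y \<noteq> Min V2" using MinV2 False by auto
        then show ?thesis using T2.par_mem[of y] y2 False F2 by (simp add: pp_eq)
      qed
    qed
  qed
  moreover have "finite VV" "VV \<noteq> {}" "0 \<notin> VV" using VV_fin T1.ne T1.nz T2.nz by auto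
  ultimately show ?thesis unfolding increasing_tree_def by blast
qed

lemma AT_C: "x \<in> CC \<Longrightarrow> anc VV pp a x \<longleftrightarrow> a \<in> CC \<and> a < x"
proof (induction x arbitrary: a rule: less_induct)
  case (less x)
  show ?case
  proof (cases "x = Min VV")
    case True
    have "\<not> anc VV pp a x" using True by (subst anc_unfold) simp
    moreover have "\<not> (a \<in> CC \<and> a < x)" using True MinVV_le C_sub by force
    ultimately show ?thesis by simp
  next
    case False
    have xV: "x \<in> VV" using less.prems C_sub by auto
    note q = pC[OF less.prems False]
    have "anc VV pp a x \<longleftrightarrow> a = pp x \<or> anc VV pp a (pp x)"
      using xV False by (subst anc_unfold) simp
    also have "\<dots> \<longleftrightarrow> a = pp x \<or> (a \<in> CC \<and> a < pp x)"
      using less.IH[OF q(2) q(1)] by simp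
    also have "\<dots> \<longleftrightarrow> a \<in> CC \<and> a < x"
      using q by force
    finally show ?thesis .
  qed
qed

lemma AT_V1: "x \<in> V1 \<Longrightarrow> anc VV pp a x \<longleftrightarrow>
   anc V1 p1 a x \<or> (a \<in> K2 \<and> (\<exists>c\<in>K1. (c = x \<or> anc V1 p1 c x) \<and> a < c))"
proof (induction x arbitrary: a rule: less_induct)
  case (less x)
  show ?case
  proof (cases "x \<in> K1")
    case True
    then have xC: "x \<in> CC" by simp
    have "anc VV pp a x \<longleftrightarrow> a \<in> CC \<and> a < x" using AT_C[OF xC] .
    also have "\<dots> \<longleftrightarrow> anc V1 p1 a x \<or> (a \<in> K2 \<and> (\<exists>c\<in>K1. (c = x \<or> anc V1 p1 c x) \<and> a < c))"
    proof
      assume a: "a \<in> CC \<and> a < x"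
      show "anc V1 p1 a x \<or> (a \<in> K2 \<and> (\<exists>c\<in>K1. (c = x \<or> anc V1 p1 c x) \<and> a < c))"
      proof (cases "a \<in> K1")
        case True then show ?thesis using T1.chain_anc[of a u1 x] \<open>x \<in> K1\<close> a by blast
      next
        case False then show ?thesis using a \<open>x \<in> K1\<close> by blast
      qed
    next
      assume a: "anc V1 p1 a x \<or> (a \<in> K2 \<and> (\<exists>c\<in>K1. (c = x \<or> anc V1 p1 c x) \<and> a < c))"
      show "a \<in> CC \<and> a < x"
      proof (cases "anc V1 p1 a x")
        case True
        then have "a \<in> chain V1 p1 x" by (simp add: chain_iff)
        then have "a \<in> K1" using T1.chain_trans[OF \<open>x \<in> K1\<close>] by blast
        then show ?thesis using True T1.anc_mem by blast
      next
        case False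
        then obtain c where "c \<in> K1" "c = x \<or> anc V1 p1 c x" "a < c" "a \<in> K2" using a by blast
        then show ?thesis using T1.anc_mem[of c x] by auto
      qed
    qed
    finally show ?thesis .
  next
    case False
    have xnC: "x \<notin> CC" using False less.prems K2_sub disj by blast
    have x1: "x \<noteq> Min VV" using MinVV xnC by auto
    have x2: "x \<noteq> Min V1" using MinV1 False by auto
    have px: "pp x = p1 x" using xnC less.prems by (simp add: pp_eq)
    have p1x: "p1 x \<in> V1" "p1 x < x" using T1.par_mem[OF less.prems x2] by auto
    have e1: "anc VV pp a x \<longleftrightarrow> a = p1 x \<or> anc VV pp a (p1 x)"
      using x1 less.prems px by (subst anc_unfold) simp
    have e2: "\<And>b. anc V1 p1 b x \<longleftrightarrow> b = p1 x \<or> anc V1 p1 b (p1 x)"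
      using x2 less.prems by (subst anc_unfold) simp
    have e3: "\<And>c. c \<in> K1 \<Longrightarrow> (c = x \<or> anc V1 p1 c x) \<longleftrightarrow> (c = p1 x \<or> anc V1 p1 c (p1 x))"
      using False e2 by blast
    show ?thesis
      unfolding e1 less.IH[OF p1x(2) p1x(1)] e2[of a]
      using e3 by (auto simp: Bex_def)
  qed
qed

lemma chain_V1:
  assumes x: "x \<in> V1"
  shows "chain VV pp x = chain V1 p1 x \<union> {a \<in> K2. a < comp_root V1 p1 u1 x}"
proof -
  note cr = T1.cr_props[OF u1 x]
  have ex: "\<And>a. (\<exists>c\<in>K1. (c = x \<or> anc V1 p1 c x) \<and> a < c) \<longleftrightarrow> a < comp_root V1 p1 u1 x"
  proof
    fix a assume "\<exists>c\<in>K1. (c = x \<or> anc V1 p1 c x) \<and> a < c"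
    then obtain c where c: "c \<in> K1" "c \<in> chain V1 p1 x" "a < c" by (auto simp: chain_iff)
    then have "c \<le> comp_root V1 p1 u1 x" using cr(3) by blast
    then show "a < comp_root V1 p1 u1 x" using c by simp
  next
    fix a assume "a < comp_root V1 p1 u1 x"
    then show "\<exists>c\<in>K1. (c = x \<or> anc V1 p1 c x) \<and> a < c" using cr(1,2) by (auto simp: chain_iff)
  qed
  show ?thesis
  proof (rule set_eqI)
    fix a
    have "a \<in> chain VV pp x \<longleftrightarrow> a = x \<or> anc VV pp a x" by (rule chain_iff)
    also have "\<dots> \<longleftrightarrow> a = x \<or> anc V1 p1 a x \<or> (a \<in> K2 \<and> a < comp_root V1 p1 u1 x)"
      using AT_V1[OF x, of a] ex[of a] by blast
    also have "\<dots> \<longleftrightarrow> a \<in> chain V1 p1 x \<union> {a \<in> K2. a < comp_root V1 p1 u1 x}"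
      by (simp add: chain_iff)
    finally show "a \<in> chain VV pp x \<longleftrightarrow> a \<in> chain V1 p1 x \<union> {a \<in> K2. a < comp_root V1 p1 u1 x}" .
  qed
qed

lemma swap_pp: "y \<in> VV \<Longrightarrow> spl_par V2 p2 u2 V1 p1 u1 y = pp y"
  using disj by (auto simp: spl_par_def Let_def Un_commute)

lemma swap_tedges: "tedges (V2 \<union> V1) (spl_par V2 p2 u2 V1 p1 u1) = tedges VV pp"
  using swap_pp by (auto simp: tedges_def Un_commute)

lemma swap_anc: "anc (V2 \<union> V1) (spl_par V2 p2 u2 V1 p1 u1) = anc VV pp"
  by (intro ext) (simp add: anc_def swap_tedges)

lemma swap_chain: "chain (V2 \<union> V1) (spl_par V2 p2 u2 V1 p1 u1) = chain VV pp"
  by (intro ext) (simp add: chain_def swap_anc)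

lemma swap_cr: "comp_root (V2 \<union> V1) (spl_par V2 p2 u2 V1 p1 u1) = comp_root VV pp"
  by (intro ext) (simp add: comp_root_def swap_chain)

lemma anc1_T: "anc V1 p1 a x \<Longrightarrow> anc VV pp a x"
  using AT_V1 T1.anc_mem by blast

end

sublocale spl \<subseteq> T: itree "V1 \<union> V2" "spl_par V1 p1 u1 V2 p2 u2"
  by unfold_locales (rule tree)

context spl begin
lemma cr_T_V1:
  assumes w: "chain VV pp w = CC" and x: "x \<in> V1" "x \<notin> K1"
  shows "comp_root VV pp w x = comp_root V1 p1 u1 x"
proof (rule cr_eqI)
  note cr = T1.cr_props[OF u1 x(1)]
  show "finite (chain VV pp w)" using w C_fin by simp
  show "comp_root V1 p1 u1 x \<in> chain VV pp w" using w cr(1) by simp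
  show "comp_root V1 p1 u1 x \<in> chain VV pp x" using chain_V1[OF x(1)] cr(2) by simp
  fix d assume d: "d \<in> chain VV pp w" "d \<in> chain VV pp x"
  show "d \<le> comp_root V1 p1 u1 x"
  proof (cases "d \<in> chain V1 p1 x")
    case True
    then have "d \<in> V1" using T1.chain_sub x(1) by blast
    then have "d \<in> K1" using d(1) w K2_sub disj by blast
    then show ?thesis using cr(3) True by blast
  next
    case False then show ?thesis using d(2) chain_V1[OF x(1)] by auto
  qed
qed
end

lemma blk_eq: "set_partition r P \<Longrightarrow> B \<in> P \<Longrightarrow> x \<in> B \<Longrightarrow> blk P x = B"
  unfolding blk_def set_partition_def by (rule the_equality) blast+

lemma blk_ne: "set_partition r P \<Longrightarrow> B \<in> P \<Longrightarrow> B \<noteq> {}"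
  unfolding set_partition_def by blast

lemma blk_props:
  assumes "set_partition r P" "pi_increasing P W q" "x \<in> W"
  shows "blk P x \<in> P" "x \<in> blk P x" "blk P x \<subseteq> W"
proof -
  have "W = \<Union>{B \<in> P. B \<subseteq> W}" using assms(2) by (simp add: pi_increasing_def)
  then obtain B where B: "B \<in> P" "B \<subseteq> W" "x \<in> B" using assms(3) by blast
  then have "blk P x = B" using blk_eq assms(1) by blast
  then show "blk P x \<in> P" "x \<in> blk P x" "blk P x \<subseteq> W" using B by auto
qed

lemma blk_split:
  assumes "set_partition r P" "pi_increasing P V1 p1" "pi_increasing P V2 p2"
    "B \<in> P" "B \<subseteq> V1 \<union> V2"
  shows "B \<subseteq> V1 \<or> B \<subseteq> V2"
proof -
  obtain x where x: "x \<in> B" using blk_ne assms(1,4) by blast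
  show ?thesis
  proof (cases "x \<in> V1")
    case True
    then have "blk P x = B" using blk_eq assms x by blast
    then show ?thesis using blk_props[OF assms(1,2) True] by simp
  next
    case False
    then have x2: "x \<in> V2" using x assms(5) by blast
    then have "blk P x = B" using blk_eq assms x by blast
    then show ?thesis using blk_props[OF assms(1,3) x2] by simp
  qed
qed

lemma Max_blk:
  assumes "set_partition r P" "pi_increasing P W q" "X \<in> P" "X \<subseteq> W"
  shows "Max X \<in> X" "Max X \<in> W"
proof -
  have "finite W" using assms(2) by (simp add: pi_increasing_def increasing_tree_def)
  then have "finite X" using assms(4) finite_subset by blast
  then show "Max X \<in> X" using blk_ne[OF assms(1,3)] by simp
  then show "Max X \<in> W" using assms(4) by blast
qed

lemma sym_R: "(x, y) \<in> (S \<union> S\<inverse>)\<^sup>* \<Longrightarrow> (y, x) \<in> (S \<union> S\<inverse>)\<^sup>*"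
proof -
  assume "(x, y) \<in> (S \<union> S\<inverse>)\<^sup>*"
  then have "(y, x) \<in> ((S \<union> S\<inverse>)\<inverse>)\<^sup>*" by (rule rtrancl_converseI)
  moreover have "(S \<union> S\<inverse>)\<inverse> = S \<union> S\<inverse>" by auto
  ultimately show ?thesis by simp
qed

lemma spl_of:
  assumes "pi_increasing P V1 p1" "pi_increasing P V2 p2" "u1 \<in> V1" "u2 \<in> V2" "V1 \<inter> V2 = {}"
  shows "spl V1 p1 V2 p2 u1 u2"
  using assms unfolding spl_def itree_def spl_axioms_def pi_increasing_def by blast

lemma pi_T:
  assumes sp: "set_partition r P" and t1: "pi_increasing P V1 p1" and t2: "pi_increasing P V2 p2"
    and u: "u1 \<in> V1" "u2 \<in> V2" and dj: "V1 \<inter> V2 = {}"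
  shows "pi_increasing P (V1 \<union> V2) (spl_par V1 p1 u1 V2 p2 u2)"
proof -
  interpret S: spl V1 p1 V2 p2 u1 u2 using spl_of[OF t1 t2 u dj] .
  interpret S': spl V2 p2 V1 p1 u2 u1 using spl_of[OF t2 t1 u(2,1)] dj by blast
  have a: "V1 \<union> V2 = \<Union>{B \<in> P. B \<subseteq> V1 \<union> V2}"
  proof
    show "V1 \<union> V2 \<subseteq> \<Union>{B \<in> P. B \<subseteq> V1 \<union> V2}"
    proof
      fix x assume "x \<in> V1 \<union> V2"
      then show "x \<in> \<Union>{B \<in> P. B \<subseteq> V1 \<union> V2}"
        using blk_props[OF sp t1, of x] blk_props[OF sp t2, of x] by blast
    qed
  qed blast
  have b: "\<forall>B\<in>P. B \<subseteq> V1 \<union> V2 \<longrightarrow> (\<forall>i\<in>B. \<forall>j\<in>B. i < j \<longrightarrow>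
      anc (V1 \<union> V2) (spl_par V1 p1 u1 V2 p2 u2) i j)"
  proof (intro ballI impI)
    fix B i j assume B: "B \<in> P" "B \<subseteq> V1 \<union> V2" and ij: "i \<in> B" "j \<in> B" "i < j"
    show "anc (V1 \<union> V2) (spl_par V1 p1 u1 V2 p2 u2) i j"
    proof (cases "B \<subseteq> V1")
      case True
      then have "anc V1 p1 i j" using t1 B ij unfolding pi_increasing_def by blast
      then show ?thesis by (rule S.anc1_T)
    next
      case False
      then have "B \<subseteq> V2" using blk_split[OF sp t1 t2 B] by blast
      then have "anc V2 p2 i j" using t2 B ij unfolding pi_increasing_def by blast
      then have "anc (V2 \<union> V1) (spl_par V2 p2 u2 V1 p1 u1) i j" by (rule S'.anc1_T)
      then show ?thesis using S'.swap_anc by simp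
    qed
  qed
  show ?thesis unfolding pi_increasing_def using S.tree a b by blast
qed

theorem lemma3p5:
  fixes r :: nat and P :: "nat set set"
    and V1 V2 :: "nat set" and p1 p2 :: "nat \<Rightarrow> nat" and v2 :: nat
  assumes "r \<ge> 2" and "set_partition r P" and "{1} \<in> P"
    and "pi_increasing P V1 p1" and "pi_increasing P V2 p2"
    and "V1 \<inter> V2 = {}"
    and "irreducible P V1 p1"
    and "v2 \<in> V2" and "v2 < Max V1"
  shows "(Max V1 > Max V2 \<longrightarrow>
            reducible P (V1 \<union> V2) (spl_par V1 p1 (Max V1) V2 p2 v2) \<and>
            dg_vert P (V1 \<union> V2) = dg_vert P V1 \<union> dg_vert P V2 \<and>
            dg_edges P (V1 \<union> V2) (spl_par V1 p1 (Max V1) V2 p2 v2) (Max V1)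
              = dg_edges P V1 p1 (Max V1) \<union> dg_edges P V2 p2 v2)
       \<and> (Max V1 < Max V2 \<and> irreducible P V2 p2 \<longrightarrow>
            irreducible P (V1 \<union> V2) (spl_par V1 p1 (Max V1) V2 p2 v2))"
proof -
  note sp = assms(2) and t1 = assms(4) and t2 = assms(5) and dj = assms(6)
    and irr1 = assms(7) and v2 = assms(8) and v2lt = assms(9)
  have fin1: "finite V1" and ne1: "V1 \<noteq> {}" using t1 by (auto simp: pi_increasing_def increasing_tree_def)
  have fin2: "finite V2" and ne2: "V2 \<noteq> {}" using t2 by (auto simp: pi_increasing_def increasing_tree_def)
  have m1: "Max V1 \<in> V1" using fin1 ne1 by simp
  have M2: "Max V2 \<in> V2" using fin2 ne2 by simp
  interpret S: spl V1 p1 V2 p2 "Max V1" v2 using spl_of[OF t1 t2 m1 v2 dj] .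
  interpret S': spl V2 p2 V1 p1 v2 "Max V1" using spl_of[OF t2 t1 v2 m1] dj by blast
  let ?V = "V1 \<union> V2" and ?p = "spl_par V1 p1 (Max V1) V2 p2 v2"
  let ?K1 = "chain V1 p1 (Max V1)" and ?K2 = "chain V2 p2 v2"
  have K1le: "\<And>a. a \<in> ?K1 \<Longrightarrow> a \<le> Max V1" using S.T1.chain_le by blast
  have K2le: "\<And>a. a \<in> ?K2 \<Longrightarrow> a \<le> v2" using S.T2.chain_le by blast
  have K1sub: "?K1 \<subseteq> V1" and K2sub: "?K2 \<subseteq> V2" using S.K1_sub S.K2_sub by auto
  have chT1: "\<And>x. x \<in> V1 \<Longrightarrow> chain ?V ?p x = chain V1 p1 x \<union> {a \<in> ?K2. a < comp_root V1 p1 (Max V1) x}"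
    using S.chain_V1 by blast
  have chT2: "\<And>x. x \<in> V2 \<Longrightarrow> chain ?V ?p x = chain V2 p2 x \<union> {a \<in> ?K1. a < comp_root V2 p2 v2 x}"
    using S'.chain_V1 S'.swap_chain by simp
  have pT: "pi_increasing P ?V ?p" using pi_T[OF sp t1 t2 m1 v2 dj] .
  have vert: "dg_vert P ?V = dg_vert P V1 \<union> dg_vert P V2"
    using blk_split[OF sp t1 t2] by (auto simp: dg_vert_def)
  have partA: "Max V1 > Max V2 \<longrightarrow>
            reducible P ?V ?p \<and> dg_vert P ?V = dg_vert P V1 \<union> dg_vert P V2 \<and>
            dg_edges P ?V ?p (Max V1) = dg_edges P V1 p1 (Max V1) \<union> dg_edges P V2 p2 v2"
  proof
    assume gt: "Max V1 > Max V2"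
    have MaxV: "Max ?V = Max V1" using Max_Un[OF fin1 ne1 fin2 ne2] gt by simp
    have chm1: "chain ?V ?p (Max V1) = ?K1 \<union> ?K2"
    proof -
      have m1C: "Max V1 \<in> ?K1 \<union> ?K2" using S.T1.self_chain by blast
      have "\<And>x. x \<in> chain ?V ?p (Max V1) \<longleftrightarrow> x \<in> ?K1 \<union> ?K2"
      proof -
        fix x
        have "x \<in> chain ?V ?p (Max V1) \<longleftrightarrow> x = Max V1 \<or> (x \<in> ?K1 \<union> ?K2 \<and> x < Max V1)"
          using S.AT_C[OF m1C] by (simp add: chain_iff)
        also have "\<dots> \<longleftrightarrow> x \<in> ?K1 \<union> ?K2"
          using m1C K1le K2le v2lt by force
        finally show "x \<in> chain ?V ?p (Max V1) \<longleftrightarrow> x \<in> ?K1 \<union> ?K2" .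
      qed
      then show ?thesis by blast
    qed
    have crT1: "\<And>x. x \<in> V1 \<Longrightarrow> x \<notin> ?K1 \<Longrightarrow> comp_root ?V ?p (Max V1) x = comp_root V1 p1 (Max V1) x"
      using S.cr_T_V1[OF chm1] by blast
    have chm1': "chain (V2 \<union> V1) (spl_par V2 p2 v2 V1 p1 (Max V1)) (Max V1) = ?K2 \<union> ?K1"
      using chm1 S'.swap_chain by auto
    have crT2: "\<And>x. x \<in> V2 \<Longrightarrow> x \<notin> ?K2 \<Longrightarrow> comp_root ?V ?p (Max V1) x = comp_root V2 p2 v2 x"
      using S'.cr_T_V1[OF chm1'] S'.swap_cr by simp
    have Eeq: "dg_edges P ?V ?p (Max V1) = dg_edges P V1 p1 (Max V1) \<union> dg_edges P V2 p2 v2"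
    proof (intro set_eqI iffI)
      fix e assume "e \<in> dg_edges P ?V ?p (Max V1)"
      then obtain X Y where e: "e = (X, Y)" and X: "X \<in> P" "X \<subseteq> ?V" "Max X \<notin> ?K1 \<union> ?K2"
        and Y: "Y = blk P (comp_root ?V ?p (Max V1) (Max X))"
        using chm1 by (cases e) (auto simp: dg_edges_iff)
      show "e \<in> dg_edges P V1 p1 (Max V1) \<union> dg_edges P V2 p2 v2"
      proof (cases "X \<subseteq> V1")
        case True
        then have "Max X \<in> V1" using Max_blk[OF sp t1 X(1)] by blast
        then show ?thesis using X Y e True crT1 by (auto simp: dg_edges_iff)
      next
        case False
        then have X2: "X \<subseteq> V2" using blk_split[OF sp t1 t2 X(1,2)] by blast
        then have "Max X \<in> V2" using Max_blk[OF sp t2 X(1)] by blast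
        then show ?thesis using X Y e X2 crT2 by (auto simp: dg_edges_iff)
      qed
    next
      fix e assume "e \<in> dg_edges P V1 p1 (Max V1) \<union> dg_edges P V2 p2 v2"
      then obtain X Y where e: "e = (X, Y)" and
        h: "(X \<in> P \<and> X \<subseteq> V1 \<and> Max X \<notin> ?K1 \<and> Y = blk P (comp_root V1 p1 (Max V1) (Max X))) \<or>
            (X \<in> P \<and> X \<subseteq> V2 \<and> Max X \<notin> ?K2 \<and> Y = blk P (comp_root V2 p2 v2 (Max X)))"
        by (cases e) (auto simp: dg_edges_iff)
      show "e \<in> dg_edges P ?V ?p (Max V1)"
      proof (cases "X \<in> P \<and> X \<subseteq> V1 \<and> Max X \<notin> ?K1 \<and> Y = blk P (comp_root V1 p1 (Max V1) (Max X))")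
        case True
        then have "Max X \<in> V1" using Max_blk[OF sp t1] by blast
        then have "Max X \<notin> ?K2" using K2sub dj by blast
        then show ?thesis using True e chm1 crT1[OF \<open>Max X \<in> V1\<close>] by (auto simp: dg_edges_iff)
      next
        case False
        then have H: "X \<in> P \<and> X \<subseteq> V2 \<and> Max X \<notin> ?K2 \<and> Y = blk P (comp_root V2 p2 v2 (Max X))"
          using h by blast
        then have "Max X \<in> V2" using Max_blk[OF sp t2] by blast
        then have "Max X \<notin> ?K1" using K1sub dj by blast
        then show ?thesis using H e chm1 crT2[OF \<open>Max X \<in> V2\<close>] by (auto simp: dg_edges_iff)
      qed
    qed
    have notconn: "\<not> dg_connected (dg_vert P ?V) (dg_edges P ?V ?p (Max ?V))"
    proof
      assume c: "dg_connected (dg_vert P ?V) (dg_edges P ?V ?p (Max ?V))"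
      let ?E = "dg_edges P ?V ?p (Max V1)"
      have inv: "\<And>X Y. (X, Y) \<in> ?E \<Longrightarrow> (X \<subseteq> V1 \<longleftrightarrow> Y \<subseteq> V1)"
      proof -
        fix X Y assume "(X, Y) \<in> ?E"
        then have "(X, Y) \<in> dg_edges P V1 p1 (Max V1) \<or> (X, Y) \<in> dg_edges P V2 p2 v2" using Eeq by blast
        then show "X \<subseteq> V1 \<longleftrightarrow> Y \<subseteq> V1"
        proof
          assume "(X, Y) \<in> dg_edges P V1 p1 (Max V1)"
          then have X: "X \<in> P" "X \<subseteq> V1" "Y = blk P (comp_root V1 p1 (Max V1) (Max X))"
            by (auto simp: dg_edges_iff)
          have "Max X \<in> V1" using Max_blk[OF sp t1 X(1,2)] by blast
          then have "comp_root V1 p1 (Max V1) (Max X) \<in> V1"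
            using S.T1.cr_props(1)[OF m1] K1sub by blast
          then show ?thesis using X blk_props[OF sp t1] by auto
        next
          assume "(X, Y) \<in> dg_edges P V2 p2 v2"
          then have X: "X \<in> P" "X \<subseteq> V2" "Y = blk P (comp_root V2 p2 v2 (Max X))"
            by (auto simp: dg_edges_iff)
          have "Max X \<in> V2" using Max_blk[OF sp t2 X(1,2)] by blast
          then have a2: "comp_root V2 p2 v2 (Max X) \<in> V2"
            using S.T2.cr_props(1)[OF v2] K2sub by blast
          have "\<not> X \<subseteq> V1" using blk_ne[OF sp X(1)] X(2) dj by blast
          moreover have "\<not> Y \<subseteq> V1" using X(3) blk_props(2)[OF sp t2 a2] a2 dj by blast
          ultimately show ?thesis by simp
        qed
      qed
      have B1: "blk P (Max V1) \<in> dg_vert P ?V" using blk_props[OF sp t1 m1] by (auto simp: dg_vert_def)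
      have B2: "blk P v2 \<in> dg_vert P ?V" using blk_props[OF sp t2 v2] by (auto simp: dg_vert_def)
      have "(blk P (Max V1), blk P v2) \<in> (?E \<union> ?E\<inverse>)\<^sup>*" using c B1 B2 MaxV by (simp add: dg_connected_def)
      then have "blk P v2 \<subseteq> V1"
      proof (induction rule: rtrancl_induct)
        case base then show ?case using blk_props[OF sp t1 m1] by simp
      next
        case (step y z) then show ?case using inv by blast
      qed
      then show False using blk_props(2)[OF sp t2 v2] v2 dj by blast
    qed
    show "reducible P ?V ?p \<and> dg_vert P ?V = dg_vert P V1 \<union> dg_vert P V2 \<and>
            dg_edges P ?V ?p (Max V1) = dg_edges P V1 p1 (Max V1) \<union> dg_edges P V2 p2 v2"
      using pT notconn vert Eeq by (simp add: reducible_def)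
  qed
  have partB: "Max V1 < Max V2 \<and> irreducible P V2 p2 \<longrightarrow> irreducible P ?V ?p"
  proof
    assume h: "Max V1 < Max V2 \<and> irreducible P V2 p2"
    then have lt: "Max V1 < Max V2" and irr2: "irreducible P V2 p2" by auto
    have MaxV: "Max ?V = Max V2" using Max_Un[OF fin1 ne1 fin2 ne2] lt by simp
    define c2 where "c2 = comp_root V2 p2 v2 (Max V2)"
    note cr2 = S.T2.cr_props[OF v2 M2, folded c2_def]
    have c2lt: "c2 < Max V1" using K2le[OF cr2(1)] v2lt by simp
    have c2V2: "c2 \<in> V2" using cr2(1) K2sub by blast
    have KT: "chain ?V ?p (Max V2) = chain V2 p2 (Max V2) \<union> {a \<in> ?K1. a < c2}"
      using chT2[OF M2] c2_def by simp
    have finKT: "finite (chain ?V ?p (Max V2))" using S.T.chain_fin M2 by blast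
    have ch2sub: "\<And>x. x \<in> V2 \<Longrightarrow> chain V2 p2 x \<subseteq> V2" using S.T2.chain_sub by blast
    have ch1sub: "\<And>x. x \<in> V1 \<Longrightarrow> chain V1 p1 x \<subseteq> V1" using S.T1.chain_sub by blast
    let ?E = "dg_edges P ?V ?p (Max V2)"
    let ?R = "(?E \<union> ?E\<inverse>)\<^sup>*"
    have E2sub: "dg_edges P V2 p2 (Max V2) \<subseteq> ?E"
    proof
      fix e assume "e \<in> dg_edges P V2 p2 (Max V2)"
      then obtain X Y where e: "e = (X, Y)" and X: "X \<in> P" "X \<subseteq> V2" "Max X \<notin> chain V2 p2 (Max V2)"
        "Y = blk P (comp_root V2 p2 (Max V2) (Max X))"
        by (cases e) (auto simp: dg_edges_iff)
      define x where "x = Max X"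
      have x: "x \<in> V2" using Max_blk[OF sp t2 X(1,2)] x_def by blast
      have xK1: "x \<notin> ?K1" using x K1sub dj by blast
      have xnT: "x \<notin> chain ?V ?p (Max V2)" using KT X(3) xK1 x_def by auto
      note crx = S.T2.cr_props[OF M2 x]
      have crT: "comp_root ?V ?p (Max V2) x = comp_root V2 p2 (Max V2) x"
      proof (rule cr_eqI[OF finKT])
        show "comp_root V2 p2 (Max V2) x \<in> chain ?V ?p (Max V2)" using KT crx(1) by simp
        show "comp_root V2 p2 (Max V2) x \<in> chain ?V ?p x" using chT2[OF x] crx(2) by simp
        fix d assume d: "d \<in> chain ?V ?p (Max V2)" "d \<in> chain ?V ?p x"
        show "d \<le> comp_root V2 p2 (Max V2) x"
        proof (cases "d \<in> chain V2 p2 (Max V2)")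
          case True
          then have "d \<in> V2" using ch2sub[OF M2] by blast
          then have "d \<in> chain V2 p2 x" using d(2) chT2[OF x] K1sub dj by blast
          then show ?thesis using crx(3) True by blast
        next
          case False
          then have dK: "d \<in> ?K1" "d < c2" using d(1) KT by auto
          then have "d \<notin> chain V2 p2 x" using K1sub dj ch2sub[OF x] by blast
          then have dlt: "d < comp_root V2 p2 v2 x" using d(2) chT2[OF x] by auto
          note crv = S.T2.cr_props[OF v2 x]
          have "min c2 (comp_root V2 p2 v2 x) \<in> chain V2 p2 (Max V2) \<inter> chain V2 p2 x"
            using S.T2.min_chain[OF cr2(1) crv(1) cr2(2) crv(2)] .
          then have "min c2 (comp_root V2 p2 v2 x) \<le> comp_root V2 p2 (Max V2) x"
            using crx(3) by blast
          then show ?thesis using dK(2) dlt by simp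
        qed
      qed
      show "e \<in> ?E" using e X xnT crT x_def by (auto simp: dg_edges_iff)
    qed
    have edge1: "\<And>X. X \<in> P \<Longrightarrow> X \<subseteq> V1 \<Longrightarrow> comp_root V1 p1 (Max V1) (Max X) > c2 \<Longrightarrow>
        (X, blk P c2) \<in> ?E"
    proof -
      fix X assume X: "X \<in> P" "X \<subseteq> V1" and a: "comp_root V1 p1 (Max V1) (Max X) > c2"
      define x where "x = Max X"
      have x: "x \<in> V1" using Max_blk[OF sp t1 X(1,2)] x_def by blast
      note crx = S.T1.cr_props[OF m1 x]
      define a where "a = comp_root V1 p1 (Max V1) x"
      have ac: "a > c2" using a x_def a_def by simp
      have "a \<le> x" using S.T1.chain_le crx(2) a_def by blast
      then have xnT: "x \<notin> chain ?V ?p (Max V2)" using KT ac x ch2sub[OF M2] dj by auto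
      have crT: "comp_root ?V ?p (Max V2) x = c2"
      proof (rule cr_eqI[OF finKT])
        show "c2 \<in> chain ?V ?p (Max V2)" using KT cr2(2) by simp
        show "c2 \<in> chain ?V ?p x" using chT1[OF x] cr2(1) ac a_def by simp
        fix d assume d: "d \<in> chain ?V ?p (Max V2)" "d \<in> chain ?V ?p x"
        show "d \<le> c2"
        proof (cases "d \<in> chain V2 p2 (Max V2)")
          case True
          then have "d \<in> V2" using ch2sub[OF M2] by blast
          then have "d \<in> ?K2" using d(2) chT1[OF x] ch1sub[OF x] dj by blast
          then show ?thesis using cr2(3) True by blast
        next
          case False then show ?thesis using d(1) KT by auto
        qed
      qed
      show "(X, blk P c2) \<in> ?E" using X xnT crT x_def by (auto simp: dg_edges_iff)
    qed
    have edge2: "\<And>X. X \<in> P \<Longrightarrow> X \<subseteq> V1 \<Longrightarrow> Max X \<notin> ?K1 \<Longrightarrow> comp_root V1 p1 (Max V1) (Max X) < c2 \<Longrightarrow>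
        (X, blk P (comp_root V1 p1 (Max V1) (Max X))) \<in> ?E"
    proof -
      fix X assume X: "X \<in> P" "X \<subseteq> V1" "Max X \<notin> ?K1" and a: "comp_root V1 p1 (Max V1) (Max X) < c2"
      define x where "x = Max X"
      have x: "x \<in> V1" using Max_blk[OF sp t1 X(1,2)] x_def by blast
      note crx = S.T1.cr_props[OF m1 x]
      define a where "a = comp_root V1 p1 (Max V1) x"
      have ac: "a < c2" using a x_def a_def by simp
      have xnT: "x \<notin> chain ?V ?p (Max V2)" using KT X(3) x_def x ch2sub[OF M2] dj by auto
      have crT: "comp_root ?V ?p (Max V2) x = a"
      proof (rule cr_eqI[OF finKT])
        show "a \<in> chain ?V ?p (Max V2)" using KT crx(1) ac a_def by simp
        show "a \<in> chain ?V ?p x" using chT1[OF x] crx(2) a_def by simp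
        fix d assume d: "d \<in> chain ?V ?p (Max V2)" "d \<in> chain ?V ?p x"
        show "d \<le> a"
        proof (cases "d \<in> chain V2 p2 (Max V2)")
          case True
          then have "d \<in> V2" using ch2sub[OF M2] by blast
          then have "d \<notin> chain V1 p1 x" using ch1sub[OF x] dj by blast
          then show ?thesis using d(2) chT1[OF x] a_def by auto
        next
          case False
          then have dK: "d \<in> ?K1" using d(1) KT by auto
          then have "d \<in> chain V1 p1 x" using d(2) chT1[OF x] K1sub K2sub dj by blast
          then show ?thesis using crx(3) dK a_def by blast
        qed
      qed
      show "(X, blk P (comp_root V1 p1 (Max V1) (Max X))) \<in> ?E"
        using X xnT crT x_def a_def by (auto simp: dg_edges_iff)
    qed
    have Rsym: "\<And>X Y. (X, Y) \<in> ?R \<Longrightarrow> (Y, X) \<in> ?R" by (rule sym_R)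
    have Rtr: "\<And>X Y Z. (X, Y) \<in> ?R \<Longrightarrow> (Y, Z) \<in> ?R \<Longrightarrow> (X, Z) \<in> ?R"
      using rtrancl_trans by metis
    have Redge: "\<And>X Y. (X, Y) \<in> ?E \<Longrightarrow> (X, Y) \<in> ?R" by blast
    let ?Bs = "blk P c2"
    have good2: "\<And>B. B \<in> dg_vert P V2 \<Longrightarrow> (B, ?Bs) \<in> ?R"
    proof -
      fix B assume B: "B \<in> dg_vert P V2"
      have Bs: "?Bs \<in> dg_vert P V2" using blk_props[OF sp t2 c2V2] by (auto simp: dg_vert_def)
      have "dg_connected (dg_vert P V2) (dg_edges P V2 p2 (Max V2))"
        using irr2 by (simp add: irreducible_def)
      then have "(B, ?Bs) \<in> (dg_edges P V2 p2 (Max V2) \<union> (dg_edges P V2 p2 (Max V2))\<inverse>)\<^sup>*"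
        using B Bs by (simp add: dg_connected_def)
      moreover have "dg_edges P V2 p2 (Max V2) \<union> (dg_edges P V2 p2 (Max V2))\<inverse> \<subseteq> ?E \<union> ?E\<inverse>"
        using E2sub by blast
      ultimately show "(B, ?Bs) \<in> ?R" using rtrancl_mono by blast
    qed
    have goodE1: "\<And>X Y. (X, Y) \<in> dg_edges P V1 p1 (Max V1) \<Longrightarrow> ((X, ?Bs) \<in> ?R \<longleftrightarrow> (Y, ?Bs) \<in> ?R)"
    proof -
      fix X Y assume "(X, Y) \<in> dg_edges P V1 p1 (Max V1)"
      then have X: "X \<in> P" "X \<subseteq> V1" "Max X \<notin> ?K1" and Y: "Y = blk P (comp_root V1 p1 (Max V1) (Max X))"
        by (auto simp: dg_edges_iff)
      define a where "a = comp_root V1 p1 (Max V1) (Max X)"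
      have x: "Max X \<in> V1" using Max_blk[OF sp t1 X(1,2)] by blast
      have aK: "a \<in> ?K1" using S.T1.cr_props(1)[OF m1 x] a_def by simp
      then have aV: "a \<in> V1" using K1sub by blast
      have "a \<noteq> c2" using aV c2V2 dj by blast
      then consider "a < c2" | "a > c2" by linarith
      then show "(X, ?Bs) \<in> ?R \<longleftrightarrow> (Y, ?Bs) \<in> ?R"
      proof cases
        case 1
        then have "(X, Y) \<in> ?E" using edge2[OF X] Y a_def by simp
        then show ?thesis using Rsym Rtr Redge by blast
      next
        case 2
        have gX: "(X, ?Bs) \<in> ?R" using edge1[OF X(1,2)] 2 a_def by blast
        have Yp: "Y \<in> P" "a \<in> Y" "Y \<subseteq> V1" using blk_props[OF sp t1 aV] Y a_def by auto
        define y where "y = Max Y"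
        have y: "y \<in> V1" "y \<in> Y" using Max_blk[OF sp t1 Yp(1,3)] y_def by auto
        have "a \<le> y" using Yp y_def fin1 finite_subset by (metis Max_ge)
        then have "a \<in> chain V1 p1 y"
          using t1 Yp y unfolding pi_increasing_def chain_iff by (cases "a = y") auto
        then have "a \<le> comp_root V1 p1 (Max V1) y" using S.T1.cr_props(3)[OF m1 y(1)] aK by blast
        then have "(Y, ?Bs) \<in> ?E" using edge1[OF Yp(1,3)] 2 y_def by simp
        then show ?thesis using gX by blast
      qed
    qed
    have Bm: "(blk P (Max V1), ?Bs) \<in> ?R"
    proof -
      have Bp: "blk P (Max V1) \<in> P" "Max V1 \<in> blk P (Max V1)" "blk P (Max V1) \<subseteq> V1"
        using blk_props[OF sp t1 m1] by auto
      have fB: "finite (blk P (Max V1))" using Bp(3) fin1 finite_subset by blast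
      have "Max (blk P (Max V1)) = Max V1"
        using Bp fB fin1 by (intro antisym) (auto intro: Max_ge Max_mono)
      moreover have "comp_root V1 p1 (Max V1) (Max V1) = Max V1"
      proof (rule antisym)
        show "comp_root V1 p1 (Max V1) (Max V1) \<le> Max V1"
          using S.T1.cr_props(1)[OF m1 m1] K1le by blast
        have "Max V1 \<in> ?K1 \<inter> ?K1" using S.T1.self_chain by blast
        then show "Max V1 \<le> comp_root V1 p1 (Max V1) (Max V1)"
          using S.T1.cr_props(3)[OF m1 m1] by blast
      qed
      ultimately have "(blk P (Max V1), ?Bs) \<in> ?E" using edge1[OF Bp(1,3)] c2lt by simp
      then show ?thesis by blast
    qed
    have good1: "\<And>B. B \<in> dg_vert P V1 \<Longrightarrow> (B, ?Bs) \<in> ?R"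
    proof -
      fix B assume B: "B \<in> dg_vert P V1"
      have Bs: "blk P (Max V1) \<in> dg_vert P V1" using blk_props[OF sp t1 m1] by (auto simp: dg_vert_def)
      have "dg_connected (dg_vert P V1) (dg_edges P V1 p1 (Max V1))"
        using irr1 by (simp add: irreducible_def)
      then have "(B, blk P (Max V1)) \<in> (dg_edges P V1 p1 (Max V1) \<union> (dg_edges P V1 p1 (Max V1))\<inverse>)\<^sup>*"
        using B Bs by (simp add: dg_connected_def)
      then show "(B, ?Bs) \<in> ?R"
      proof (induction rule: converse_rtrancl_induct)
        case base then show ?case using Bm .
      next
        case (step y z) then show ?case using goodE1 by blast
      qed
    qed
    have conn: "dg_connected (dg_vert P ?V) (dg_edges P ?V ?p (Max ?V))"
      unfolding dg_connected_def MaxV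
    proof (intro ballI)
      fix B B' assume B: "B \<in> dg_vert P ?V" and B': "B' \<in> dg_vert P ?V"
      have g: "(B, ?Bs) \<in> ?R" "(B', ?Bs) \<in> ?R" using B B' vert good1 good2 by auto
      show "(B, B') \<in> ?R" using Rtr[OF g(1) Rsym[OF g(2)]] .
    qed
    show "irreducible P ?V ?p" using pT conn by (simp add: irreducible_def)
  qed
  show ?thesis using partA partB by blast
qed

end
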